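(* Let $n\in\mathbb N$ and let $\mu$ be any probability measure on $[n]=\{1,\dots,n\}$. Fix $q,z\in\mathbb N$ with $z\ge 2n^{1-1/q}$. Let $x_1,\dots,x_{qz}$ be chosen independently at random according to $\mu$. Then $$\Pr\Big(\exists\, i_1,\dots,i_q \text{ with } (j-1)z<i_j\le jz \text{ for each } j,\ x_{i_1}=x_{i_2}=\dots=x_{i_q}\Big)\ \ge\ 1-e^{-cz/n^{1-1/q}}$$ for any $c\le -\tfrac14\ln(1-2^{-q})$, and in particular for any $c\le 2^{-q-2}$. *)

theory Defs
  imports "HOL-Probability.Probability"
begin

definition block_collision :: "nat \<Rightarrow> nat \<Rightarrow> (nat \<Rightarrow> nat) set" where
  "block_collision q z = {x. \<exists>ind :: nat \<Rightarrow> nat.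
      (\<forall>j\<in>{1..q}. (j - 1) * z < ind j \<and> ind j \<le> j * z) \<and>
      (\<forall>j\<in>{1..q}. \<forall>k\<in>{1..q}. x (ind j) = x (ind k))}"

end

theory Submission
  imports Defs
begin


lemma Pi_pmf_indep2:
  fixes p :: "'a \<Rightarrow> 'b pmf"
  assumes fin: "finite A" "finite B" and disj: "A \<inter> B = {}"
    and S: "\<And>x y. (\<And>i. i \<in> A \<Longrightarrow> x i = y i) \<Longrightarrow> (x \<in> S \<longleftrightarrow> y \<in> S)"
    and T: "\<And>x y. (\<And>i. i \<in> B \<Longrightarrow> x i = y i) \<Longrightarrow> (x \<in> T \<longleftrightarrow> y \<in> T)"
  shows "measure_pmf.prob (Pi_pmf (A \<union> B) d p) (S \<inter> T) =
         measure_pmf.prob (Pi_pmf A d p) S * measure_pmf.prob (Pi_pmf B d p) T"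
proof -
  let ?h = "\<lambda>(f,g) x. if x \<in> A then f x else g x"
  let ?PA = "Pi_pmf A d p" and ?PB = "Pi_pmf B d p"
  have "measure_pmf.prob (Pi_pmf (A \<union> B) d p) (S \<inter> T) =
        measure_pmf.prob (pair_pmf ?PA ?PB) (?h -` (S \<inter> T))"
    by (simp add: Pi_pmf_union[OF fin disj])
  also have "\<dots> = measure_pmf.prob (pair_pmf ?PA ?PB) ((S \<inter> set_pmf ?PA) \<times> (T \<inter> set_pmf ?PB))"
  proof (rule measure_prob_cong_0)
    have key: "(?h fg \<in> S \<inter> T) = (fg \<in> (S \<inter> set_pmf ?PA) \<times> (T \<inter> set_pmf ?PB))"
      if "fg \<in> set_pmf (pair_pmf ?PA ?PB)" for fg
    proof -
      obtain f g where fg: "fg = (f,g)" by (cases fg)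
      with that have f: "f \<in> set_pmf ?PA" and g: "g \<in> set_pmf ?PB" by auto
      have "?h fg \<in> S \<longleftrightarrow> f \<in> S" using S[of "?h fg" f] fg by auto
      moreover have "?h fg \<in> T \<longleftrightarrow> g \<in> T"
      proof (rule T)
        show "\<And>i. i \<in> B \<Longrightarrow> ?h fg i = g i" using fg disj by auto
      qed
      ultimately show ?thesis using f g fg by auto
    qed
    show "\<And>x. x \<in> ?h -` (S \<inter> T) - (S \<inter> set_pmf ?PA) \<times> (T \<inter> set_pmf ?PB) \<Longrightarrow> pmf (pair_pmf ?PA ?PB) x = 0"
      using key by (auto simp: set_pmf_eq)
    show "\<And>x. x \<in> (S \<inter> set_pmf ?PA) \<times> (T \<inter> set_pmf ?PB) - ?h -` (S \<inter> T) \<Longrightarrow> pmf (pair_pmf ?PA ?PB) x = 0"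
      using key by (auto simp: set_pmf_eq)
  qed
  also have "\<dots> = measure_pmf.prob ?PA (S \<inter> set_pmf ?PA) * measure_pmf.prob ?PB (T \<inter> set_pmf ?PB)"
    by (rule measure_pmf_prob_product) auto
  also have "\<dots> = measure_pmf.prob ?PA S * measure_pmf.prob ?PB T"
    by (simp add: measure_Int_set_pmf)
  finally show ?thesis .
qed

lemma Pi_pmf_indep:
  fixes p :: "'a \<Rightarrow> 'b pmf" and C :: "'j \<Rightarrow> 'a set"
  assumes "finite J" "\<And>j. j \<in> J \<Longrightarrow> finite (C j)" "disjoint_family_on C J"
    and "\<And>j x y. j \<in> J \<Longrightarrow> (\<And>i. i \<in> C j \<Longrightarrow> x i = y i) \<Longrightarrow> (x \<in> S j \<longleftrightarrow> y \<in> S j)"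
  shows "measure_pmf.prob (Pi_pmf (\<Union>j\<in>J. C j) d p) (\<Inter>j\<in>J. S j) =
         (\<Prod>j\<in>J. measure_pmf.prob (Pi_pmf (C j) d p) (S j))"
  using assms
proof (induction J rule: finite_induct)
  case empty
  then show ?case by simp
next
  case (insert j J)
  have "measure_pmf.prob (Pi_pmf (C j \<union> (\<Union>j\<in>J. C j)) d p) (S j \<inter> (\<Inter>j\<in>J. S j)) =
        measure_pmf.prob (Pi_pmf (C j) d p) (S j) * measure_pmf.prob (Pi_pmf (\<Union>j\<in>J. C j) d p) (\<Inter>j\<in>J. S j)"
  proof (rule Pi_pmf_indep2)
    show "finite (C j)" "finite (\<Union>j\<in>J. C j)" using insert.prems(1) insert.hyps(1) by auto
    show "C j \<inter> \<Union> (C ` J) = {}" using insert.prems(2) insert.hyps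
      unfolding disjoint_family_on_def by fastforce
    show "x \<in> S j \<longleftrightarrow> y \<in> S j" if "\<And>i. i \<in> C j \<Longrightarrow> x i = y i" for x y
      using insert.prems(3)[of j x y] that by auto
    show "x \<in> (\<Inter>j\<in>J. S j) \<longleftrightarrow> y \<in> (\<Inter>j\<in>J. S j)" if xy: "\<And>i. i \<in> (\<Union>j\<in>J. C j) \<Longrightarrow> x i = y i" for x y
    proof -
      have h: "x \<in> S j' \<longleftrightarrow> y \<in> S j'" if "j' \<in> J" for j'
        by (rule insert.prems(3)) (use that xy in auto)
      thus ?thesis by blast
    qed
  qed
  moreover have "measure_pmf.prob (Pi_pmf (\<Union>j\<in>J. C j) d p) (\<Inter>j\<in>J. S j) =
         (\<Prod>j\<in>J. measure_pmf.prob (Pi_pmf (C j) d p) (S j))"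
  proof (rule insert.IH)
    show "\<And>j. j \<in> J \<Longrightarrow> finite (C j)" using insert.prems(1) by blast
    show "disjoint_family_on C J" using insert.prems(2) by (auto simp: disjoint_family_on_def)
    show "\<And>j x y. j \<in> J \<Longrightarrow> (\<And>i. i \<in> C j \<Longrightarrow> x i = y i) \<Longrightarrow> (x \<in> S j \<longleftrightarrow> y \<in> S j)"
      by (rule insert.prems(3)) blast+
  qed
  ultimately show ?case using insert.hyps by simp
qed

lemma Pi_pmf_restrict_event:
  fixes p :: "'a \<Rightarrow> 'b pmf"
  assumes "finite I" "U \<subseteq> I"
    and "\<And>x y. (\<And>i. i \<in> U \<Longrightarrow> x i = y i) \<Longrightarrow> (x \<in> S \<longleftrightarrow> y \<in> S)"
  shows "measure_pmf.prob (Pi_pmf I d p) S = measure_pmf.prob (Pi_pmf U d p) S"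
proof -
  have "measure_pmf.prob (Pi_pmf U d p) S =
        measure_pmf.prob (Pi_pmf I d p) ((\<lambda>f x. if x \<in> U then f x else d) -` S)"
    by (simp add: Pi_pmf_subset[OF assms(1,2)])
  also have "(\<lambda>f x. if x \<in> U then f x else d) -` S = S"
  proof -
    have "((\<lambda>x. if x \<in> U then f x else d) \<in> S) = (f \<in> S)" for f
      by (rule assms(3)) simp
    thus ?thesis by blast
  qed
  finally show ?thesis by simp
qed



lemma prob_compl_pmf: "measure_pmf.prob M (UNIV - X) = 1 - measure_pmf.prob M X"
  using measure_pmf.prob_compl[of X M] by simp

lemma prob_Pi_avoid:
  fixes \<mu> :: "nat pmf"
  assumes "finite C" "card C = s"
  shows "measure_pmf.prob (Pi_pmf C d (\<lambda>_. \<mu>)) (Pi C (\<lambda>_. - W)) = (1 - measure_pmf.prob \<mu> W) ^ s"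
proof -
  have "measure_pmf.prob (Pi_pmf C d (\<lambda>_. \<mu>)) (Pi C (\<lambda>_. - W)) = (\<Prod>l\<in>C. measure_pmf.prob \<mu> (- W))"
    using assms by (simp add: measure_Pi_pmf_Pi)
  also have "measure_pmf.prob \<mu> (- W) = 1 - measure_pmf.prob \<mu> W"
    using measure_pmf.prob_compl[of W \<mu>] by (simp add: Compl_eq_Diff_UNIV)
  finally show ?thesis using assms by simp
qed

lemma chunk_prob1:
  fixes \<mu> :: "nat pmf"
  assumes "finite C" "card C = s"
  shows "measure_pmf.prob (Pi_pmf C d (\<lambda>_. \<mu>)) {x. \<exists>l\<in>C. x l = v} = 1 - (1 - pmf \<mu> v) ^ s"
proof -
  have e: "{x. \<exists>l\<in>C. x l = v} = UNIV - Pi C (\<lambda>_. - {v})" by auto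
  show ?thesis unfolding e
    by (simp add: prob_compl_pmf prob_Pi_avoid[OF assms] measure_pmf_single)
qed

lemma chunk_prob2:
  fixes \<mu> :: "nat pmf"
  assumes "finite C" "card C = s" "v \<noteq> w"
  shows "measure_pmf.prob (Pi_pmf C d (\<lambda>_. \<mu>)) {x. (\<exists>l\<in>C. x l = v) \<and> (\<exists>l\<in>C. x l = w)}
     \<le> (1 - (1 - pmf \<mu> v) ^ s) * (1 - (1 - pmf \<mu> w) ^ s)"
proof -
  let ?P = "Pi_pmf C d (\<lambda>_. \<mu>)"
  let ?V = "Pi C (\<lambda>_. - {v})" and ?W = "Pi C (\<lambda>_. - {w})"
  have e: "{x. (\<exists>l\<in>C. x l = v) \<and> (\<exists>l\<in>C. x l = w)} = UNIV - (?V \<union> ?W)" by auto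
  have e2: "?W \<inter> ?V = Pi C (\<lambda>_. - {v,w})" by auto
  have pv: "measure_pmf.prob \<mu> {v} = pmf \<mu> v" and pw: "measure_pmf.prob \<mu> {w} = pmf \<mu> w"
    by (simp_all add: measure_pmf_single)
  have pvw: "measure_pmf.prob \<mu> {v,w} = pmf \<mu> v + pmf \<mu> w"
    using assms(3) by (simp add: measure_measure_pmf_finite)
  have le1: "pmf \<mu> v + pmf \<mu> w \<le> 1"
    using measure_pmf.prob_le_1[of \<mu> "{v,w}"] pvw by simp
  have "measure_pmf.prob ?P (?V \<union> ?W) = measure_pmf.prob ?P ?V + (measure_pmf.prob ?P ?W - measure_pmf.prob ?P (?W \<inter> ?V))"
    by (simp add: measure_pmf.finite_measure_Union' measure_pmf.finite_measure_Diff')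
  hence "measure_pmf.prob ?P {x. (\<exists>l\<in>C. x l = v) \<and> (\<exists>l\<in>C. x l = w)} =
     1 - ((1 - pmf \<mu> v) ^ s + ((1 - pmf \<mu> w) ^ s - (1 - (pmf \<mu> v + pmf \<mu> w)) ^ s))"
    unfolding e e2
    by (simp add: prob_compl_pmf prob_Pi_avoid[OF assms(1,2)] pv pw pvw)
  also have "\<dots> \<le> (1 - (1 - pmf \<mu> v) ^ s) * (1 - (1 - pmf \<mu> w) ^ s)"
  proof -
    have "(1 - (pmf \<mu> v + pmf \<mu> w)) ^ s \<le> ((1 - pmf \<mu> v) * (1 - pmf \<mu> w)) ^ s"
      by (rule power_mono) (use le1 in \<open>auto simp: algebra_simps\<close>)
    hence "(1 - (pmf \<mu> v + pmf \<mu> w)) ^ s \<le> (1 - pmf \<mu> v) ^ s * (1 - pmf \<mu> w) ^ s"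
      by (simp only: power_mult_distrib)
    thus ?thesis by (simp add: algebra_simps)
  qed
  finally show ?thesis .
qed



lemma exp_neg1_le: "exp (-1::real) \<le> 2/5"
proof -
  have "(9/8::real) ^ 8 \<le> exp (1/8) ^ 8"
    by (rule power_mono) (use exp_ge_add_one_self[of "1/8::real"] in auto)
  also have "exp (1/8::real) ^ 8 = exp 1"
    using exp_of_nat_mult[of 8 "1/8::real"] by simp
  moreover have "(5/2::real) \<le> (9/8)^8" by (simp add: eval_nat_numeral)
  ultimately have "exp (1::real) \<ge> 5/2" by linarith
  thus ?thesis by (simp add: exp_minus field_simps)
qed

lemma one_minus_exp_lower:
  fixes x :: real assumes "x \<ge> 0"
  shows "1 - exp (-x) \<ge> 3/5 * min 1 x"
proof (cases "x \<le> 1")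
  case True
  have "exp (1 * ((1 - x) *\<^sub>R 0 + x *\<^sub>R (-1))) \<le> (1 - x) * exp (1 * 0) + x * exp (1 * (-1::real))"
    by (rule convex_onD[OF convex_on_exp[of 1]]) (use True assms in auto)
  hence "exp (-x) \<le> (1 - x) + x * exp (-1)" by simp
  moreover have "x * exp (-1) \<le> x * (2/5)" using mult_left_mono[OF exp_neg1_le assms] .
  ultimately show ?thesis using True by simp
next
  case False
  have "exp (-x) \<le> exp (-1)" using False by simp
  moreover have "min 1 x = 1" using False by simp
  ultimately show ?thesis using exp_neg1_le by linarith
qed

lemma a_lower:
  fixes p :: real assumes "0 \<le> p" "p \<le> 1"
  shows "1 - (1 - p) ^ s \<ge> 3/5 * min 1 (real s * p)"
proof -
  have "(1 - p) ^ s \<le> exp (-p) ^ s"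
    by (rule power_mono) (use exp_ge_add_one_self[of "-p"] assms in auto)
  also have "\<dots> = exp (- (real s * p))" using exp_of_nat_mult[of s "-p"] by simp
  finally show ?thesis using one_minus_exp_lower[of "real s * p"] assms by simp
qed

lemma sum_min_pow:
  fixes \<mu> :: "nat pmf" and s :: nat
  assumes supp: "set_pmf \<mu> \<subseteq> {1..n}" and q: "q \<ge> 1" and sbig: "real s ^ q \<ge> real n ^ (q - 1)"
  shows "(\<Sum>v\<in>{1..n}. min 1 (real s * pmf \<mu> v) ^ q) \<ge> 1"
proof (cases "\<exists>v\<in>{1..n}. real s * pmf \<mu> v \<ge> 1")
  case True
  then obtain v where v: "v \<in> {1..n}" "real s * pmf \<mu> v \<ge> 1" by blast
  have "1 = min 1 (real s * pmf \<mu> v) ^ q" using v by simp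
  also have "\<dots> \<le> (\<Sum>v\<in>{1..n}. min 1 (real s * pmf \<mu> v) ^ q)"
    by (rule member_le_sum) (use v in auto)
  finally show ?thesis .
next
  case False
  have n1: "n \<ge> 1"
  proof -
    obtain v where "v \<in> set_pmf \<mu>" using set_pmf_not_empty[of \<mu>] by blast
    thus ?thesis using supp by force
  qed
  have sum1: "(\<Sum>v\<in>{1..n}. pmf \<mu> v) = 1" by (rule sum_pmf_eq_1) (use supp in auto)
  have "(\<Sum>v\<in>{1..n}. min 1 (real s * pmf \<mu> v) ^ q) = (\<Sum>v\<in>{1..n}. (real s * pmf \<mu> v) ^ q)"
  proof (intro sum.cong refl)
    fix v assume v: "v \<in> {1..n}"
    hence "real s * pmf \<mu> v < 1" using False by (meson not_le)
    thus "min 1 (real s * pmf \<mu> v) ^ q = (real s * pmf \<mu> v) ^ q" by simp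
  qed
  also have "\<dots> \<ge> (\<Sum>v\<in>{1..n}. (real s / real n) ^ q * (1 + real q * (real n * pmf \<mu> v - 1)))"
  proof (rule sum_mono)
    fix v assume "v \<in> {1..n}"
    have "1 + real q * (real n * pmf \<mu> v - 1) \<le> (1 + (real n * pmf \<mu> v - 1)) ^ q"
      by (rule Bernoulli_inequality) simp
    hence "(real s / real n) ^ q * (1 + real q * (real n * pmf \<mu> v - 1))
        \<le> (real s / real n) ^ q * (real n * pmf \<mu> v) ^ q"
      by (intro mult_left_mono) auto
    also have "\<dots> = (real s * pmf \<mu> v) ^ q"
      using n1 by (simp add: power_mult_distrib[symmetric])
    finally show "(real s / real n) ^ q * (1 + real q * (real n * pmf \<mu> v - 1)) \<le> (real s * pmf \<mu> v) ^ q" .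
  qed
  also have "(\<Sum>v\<in>{1..n}. (real s / real n) ^ q * (1 + real q * (real n * pmf \<mu> v - 1)))
      = (real s / real n) ^ q * (\<Sum>v\<in>{1..n}. (1 - real q) + (real q * real n) * pmf \<mu> v)"
    by (simp add: sum_distrib_left algebra_simps)
  also have "(\<Sum>v\<in>{1..n}. (1 - real q) + (real q * real n) * pmf \<mu> v) = real n * (1 - real q) + (real q * real n) * (\<Sum>v\<in>{1..n}. pmf \<mu> v)"
    by (simp add: sum.distrib sum_distrib_left[symmetric])
  also have "\<dots> = real n" unfolding sum1 by (simp add: algebra_simps)
  also have "(real s / real n) ^ q * real n = real s ^ q / real n ^ (q - 1)"
  proof -
    have "real n ^ q = real n ^ (q - 1) * real n" using q by (metis power_minus_mult not_one_le_zero le_zero_eq neq0_conv)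
    thus ?thesis using n1 by (simp add: power_divide field_simps)
  qed
  finally have h: "real s ^ q / real n ^ (q - 1) \<le> (\<Sum>v\<in>{1..n}. min 1 (real s * pmf \<mu> v) ^ q)" .
  moreover have "1 \<le> real s ^ q / real n ^ (q - 1)" using sbig n1 by (simp add: le_divide_eq)
  ultimately show ?thesis by linarith
qed



lemma subexp:
  fixes \<mu> :: "nat pmf" and C :: "nat \<Rightarrow> nat set" and J :: "nat set" and s :: nat
  assumes supp: "set_pmf \<mu> \<subseteq> {1..n}" and J: "finite J" "card J = q" and q2: "q \<ge> 2"
    and disj: "disjoint_family_on C J" and Cfin: "\<And>j. j \<in> J \<Longrightarrow> finite (C j)"
    and Ccard: "\<And>j. j \<in> J \<Longrightarrow> card (C j) = s"
    and sbig: "real s ^ q \<ge> real n ^ (q - 1)"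
  shows "measure_pmf.prob (Pi_pmf (\<Union>j\<in>J. C j) 0 (\<lambda>_. \<mu>)) {x. \<exists>v. \<forall>j\<in>J. \<exists>l\<in>C j. x l = v} \<ge> (1/2) ^ q"
proof -
  define P where "P = Pi_pmf (\<Union>j\<in>J. C j) 0 (\<lambda>_. \<mu>)"
  define A where "A v = {x. \<forall>j\<in>J. \<exists>l\<in>C j. x l = v}" for v :: nat
  define a where "a v = 1 - (1 - pmf \<mu> v) ^ s" for v
  define V where "V = {1..n::nat}"
  define m where "m = (\<Sum>v\<in>V. a v ^ q)"
  define E where "E = {x. \<exists>v. \<forall>j\<in>J. \<exists>l\<in>C j. x l = (v::nat)}"
  have finV: "finite V" by (simp add: V_def)
  have a_nn: "0 \<le> a v" for v
  proof -
    have "(1 - pmf \<mu> v) ^ s \<le> 1" by (rule power_le_one) (auto simp: pmf_le_1)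
    thus ?thesis by (simp add: a_def)
  qed
  have PA: "measure_pmf.prob P (A v) = a v ^ q" for v
  proof -
    have "A v = (\<Inter>j\<in>J. {x. \<exists>l\<in>C j. x l = v})" by (auto simp: A_def)
    hence "measure_pmf.prob P (A v) = (\<Prod>j\<in>J. measure_pmf.prob (Pi_pmf (C j) 0 (\<lambda>_. \<mu>)) {x. \<exists>l\<in>C j. x l = v})"
      unfolding P_def by (simp only:) (rule Pi_pmf_indep[OF J(1) Cfin disj], auto)
    also have "\<dots> = (\<Prod>j\<in>J. a v)"
      by (intro prod.cong refl) (simp add: chunk_prob1[OF Cfin Ccard] a_def)
    finally show ?thesis using J by simp
  qed
  have PAA: "measure_pmf.prob P (A v \<inter> A w) \<le> a v ^ q * a w ^ q" if "v \<noteq> w" for v w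
  proof -
    have "A v \<inter> A w = (\<Inter>j\<in>J. {x. (\<exists>l\<in>C j. x l = v) \<and> (\<exists>l\<in>C j. x l = w)})" by (auto simp: A_def)
    hence "measure_pmf.prob P (A v \<inter> A w) = (\<Prod>j\<in>J. measure_pmf.prob (Pi_pmf (C j) 0 (\<lambda>_. \<mu>))
              {x. (\<exists>l\<in>C j. x l = v) \<and> (\<exists>l\<in>C j. x l = w)})"
      unfolding P_def by (simp only:) (rule Pi_pmf_indep[OF J(1) Cfin disj], auto)
    also have "\<dots> \<le> (\<Prod>j\<in>J. a v * a w)"
      by (intro prod_mono conjI measure_nonneg) (simp add: chunk_prob2[OF Cfin Ccard that] a_def)
    finally show ?thesis using J by (simp add: power_mult_distrib)
  qed
  have finP: "finite (set_pmf P)"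
  proof -
    have "set_pmf P \<subseteq> PiE_dflt (\<Union>j\<in>J. C j) 0 (set_pmf \<circ> (\<lambda>_. \<mu>))"
      unfolding P_def by (rule set_Pi_pmf_subset') (use J Cfin in auto)
    moreover have "finite (PiE_dflt (\<Union>j\<in>J. C j) 0 (set_pmf \<circ> (\<lambda>_. \<mu>)))"
      by (rule finite_PiE_dflt) (use J Cfin supp finite_subset in auto)
    ultimately show ?thesis by (rule finite_subset)
  qed
  have int: "integrable (measure_pmf P) f" for f :: "_ \<Rightarrow> real"
    by (rule integrable_measure_pmf_finite[OF finP])
  define Y where "Y x = (\<Sum>v\<in>V. indicator (A v) x :: real)" for x
  define lam where "lam = 1 / (1 + m)"
  have m_nn: "0 \<le> m" unfolding m_def by (intro sum_nonneg) (simp add: a_nn)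
  have lam_nn: "0 \<le> lam" using m_nn by (simp add: lam_def)
  have pt: "2 * lam * Y x - lam ^ 2 * (Y x) ^ 2 \<le> indicator E x" for x
  proof (cases "Y x = 0")
    case True thus ?thesis by simp
  next
    case False
    have "\<exists>v\<in>V. x \<in> A v"
    proof (rule ccontr)
      assume "\<not> (\<exists>v\<in>V. x \<in> A v)"
      hence "Y x = 0" unfolding Y_def by (intro sum.neutral) (auto simp: indicator_def)
      with False show False by simp
    qed
    then obtain v where "v \<in> V" "x \<in> A v" by blast
    hence "x \<in> E" by (auto simp: A_def E_def)
    moreover have "2 * lam * Y x - lam ^ 2 * (Y x) ^ 2 \<le> 1"
      using sum_squares_ge_zero[of "1 - lam * Y x" 0] by (simp add: power2_eq_square algebra_simps)
    ultimately show ?thesis by simp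
  qed
  have EY: "measure_pmf.expectation P Y = m"
    unfolding Y_def m_def by (simp add: Bochner_Integration.integral_sum int PA)
  have Y2: "(Y x) ^ 2 = (\<Sum>v\<in>V. \<Sum>w\<in>V. indicator (A v \<inter> A w) x)" for x
    unfolding Y_def power2_eq_square sum_product by (simp add: indicator_inter_arith)
  have EY2: "measure_pmf.expectation P (\<lambda>x. (Y x) ^ 2) \<le> m + m ^ 2"
  proof -
    have "measure_pmf.expectation P (\<lambda>x. (Y x) ^ 2) = (\<Sum>v\<in>V. \<Sum>w\<in>V. measure_pmf.prob P (A v \<inter> A w))"
      unfolding Y2 by (simp add: Bochner_Integration.integral_sum int)
    also have "\<dots> \<le> (\<Sum>v\<in>V. \<Sum>w\<in>V. (if v = w then a v ^ q else 0) + a v ^ q * a w ^ q)"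
    proof (intro sum_mono)
      fix v w
      show "measure_pmf.prob P (A v \<inter> A w) \<le> (if v = w then a v ^ q else 0) + a v ^ q * a w ^ q"
      proof (cases "v = w")
        case True thus ?thesis using PA[of v] a_nn[of v] by simp
      next
        case False thus ?thesis using PAA[OF False] by simp
      qed
    qed
    also have "\<dots> = m + m ^ 2"
      unfolding m_def by (simp add: sum.distrib power2_eq_square sum_product finV)
    finally show ?thesis .
  qed
  have "measure_pmf.prob P E = measure_pmf.expectation P (indicator E)" by simp
  also have "\<dots> \<ge> measure_pmf.expectation P (\<lambda>x. 2 * lam * Y x - lam ^ 2 * (Y x) ^ 2)"
    by (rule integral_mono[OF int int]) (use pt in auto)
  finally have "measure_pmf.prob P E \<ge> 2 * lam * m - lam ^ 2 * measure_pmf.expectation P (\<lambda>x. (Y x) ^ 2)"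
    by (simp add: int EY)
  moreover have "lam ^ 2 * measure_pmf.expectation P (\<lambda>x. (Y x) ^ 2) \<le> lam ^ 2 * (m + m ^ 2)"
    by (rule mult_left_mono[OF EY2]) simp
  moreover have "2 * lam * m - lam ^ 2 * (m + m ^ 2) = m / (1 + m)"
  proof -
    have l1: "lam * (1 + m) = 1" using m_nn by (simp add: lam_def)
    have "lam ^ 2 * (m + m ^ 2) = lam * m * (lam * (1 + m))" by (simp add: power2_eq_square algebra_simps)
    hence "lam ^ 2 * (m + m ^ 2) = lam * m" using l1 by simp
    thus ?thesis by (simp add: lam_def)
  qed
  ultimately have PE: "measure_pmf.prob P E \<ge> m / (1 + m)" by linarith
  have mlow: "m \<ge> (3/5) ^ q"
  proof -
    have "(3/5::real) ^ q = (3/5) ^ q * 1" by simp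
    also have "\<dots> \<le> (3/5) ^ q * (\<Sum>v\<in>V. min 1 (real s * pmf \<mu> v) ^ q)"
      by (intro mult_left_mono sum_min_pow[OF supp _ sbig, folded V_def]) (use q2 in auto)
    also have "\<dots> = (\<Sum>v\<in>V. (3/5 * min 1 (real s * pmf \<mu> v)) ^ q)"
      unfolding sum_distrib_left by (intro sum.cong refl) (simp only: power_mult_distrib)
    also have "\<dots> \<le> m"
      unfolding m_def a_def by (intro sum_mono power_mono a_lower) (auto simp: pmf_le_1)
    finally show ?thesis .
  qed
  have "(1/2::real) ^ q \<le> (3/5) ^ q / (1 + (3/5) ^ q)"
  proof -
    have "(6/5::real) ^ 2 \<le> (6/5) ^ q" by (rule power_increasing) (use q2 in auto)
    moreover have "(3/5::real) ^ q \<le> (3/5) ^ 2" by (rule power_decreasing) (use q2 in auto)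
    ultimately have "1 + (3/5::real) ^ q \<le> (6/5) ^ q" by (simp add: power2_eq_square)
    also have "(6/5::real) ^ q = 2 ^ q * (3/5) ^ q" by (simp add: power_mult_distrib[symmetric])
    finally have h: "1 + (3/5::real) ^ q \<le> 2 ^ q * (3/5) ^ q" .
    have "(3/5::real) ^ q / (2 ^ q * (3/5) ^ q) \<le> (3/5) ^ q / (1 + (3/5) ^ q)"
      by (rule divide_left_mono[OF h]) (auto intro!: mult_pos_pos add_pos_pos)
    moreover have "(3/5::real) ^ q / (2 ^ q * (3/5) ^ q) = (1/2) ^ q" by (simp add: power_one_over)
    ultimately show ?thesis by simp
  qed
  also have "\<dots> \<le> m / (1 + m)"
  proof -
    define c :: real where "c = (3/5) ^ q"
    have c0: "0 \<le> c" by (simp add: c_def)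
    have cm: "c \<le> m" using mlow by (simp add: c_def)
    have p1: "0 < 1 + c" and p2: "0 < 1 + m" using c0 m_nn by auto
    have "c * (1 + m) \<le> m * (1 + c)" using cm by (simp add: algebra_simps)
    hence "c / (1 + c) \<le> m / (1 + m)" using p1 p2 by (simp add: divide_le_eq le_divide_eq mult.commute)
    thus ?thesis by (simp add: c_def)
  qed
  finally show ?thesis using PE unfolding P_def E_def by linarith
qed



lemma chunk_idx:
  fixes a z i s l :: nat
  assumes "l \<in> greaterThanAtMost (a * z + i * s) (a * z + i * s + s)" "(i+1) * s \<le> z"
  shows "(l - 1) div z = a \<and> ((l - 1) mod z) div s = i"
proof -
  define r where "r = l - (a * z + i * s) - 1"
  have l: "l - 1 = a * z + (i * s + r)" and r: "r < s" using assms(1) by (auto simp: r_def)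
  have b: "i * s + r < z" using r assms(2) by (simp add: algebra_simps)
  hence z0: "z > 0" by simp
  have "(l - 1) div z = a" unfolding l using b z0 by simp
  moreover have "(l - 1) mod z = i * s + r" unfolding l using b z0 by simp
  moreover have "(i * s + r) div s = i" using r by simp
  ultimately show ?thesis by simp
qed

lemma k_lower:
  fixes z s :: nat and t :: real
  assumes "t \<ge> 1" "real z \<ge> 2 * t" "real s \<ge> t" "real s < t + 1"
  shows "real (z div s) \<ge> real z / (4 * t)"
proof -
  have s0: "s > 0" using assms by simp
  have "z \<ge> s" using assms by linarith
  hence k1: "z div s \<ge> 1" using s0 by (simp add: Suc_le_eq div_greater_zero_iff)
  have "z < (z div s + 1) * s" using s0
    by (metis add.commute div_mult_mod_eq mod_less_divisor add_less_cancel_left distrib_right mult_1)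
  hence "real z < (real (z div s) + 1) * real s" by (metis of_nat_add of_nat_less_iff of_nat_mult of_nat_1)
  also have "\<dots> \<le> (2 * real (z div s)) * (2 * t)"
    by (rule mult_mono) (use k1 assms in auto)
  finally have "real z \<le> real (z div s) * (4 * t)" by simp
  thus ?thesis using assms by (simp add: divide_le_eq)
qed



lemma main_bound:
  fixes n q z :: nat and \<mu> :: "nat pmf" and c :: real
  assumes supp: "set_pmf \<mu> \<subseteq> {1..n}"
    and q1: "q \<ge> 1"
    and zb: "real z \<ge> 2 * real n powr (1 - 1 / real q)"
    and c: "c \<le> - (1/4) * ln (1 - 2 powr (- real q))"
  shows "measure_pmf.prob (Pi_pmf {1..q*z} 0 (\<lambda>_. \<mu>)) (block_collision q z)
              \<ge> 1 - exp (- c * real z / real n powr (1 - 1 / real q))"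
proof -
  let ?P = "Pi_pmf {1..q*z} 0 (\<lambda>_. \<mu>)"
  define t where "t = real n powr (1 - 1 / real q)"
  have n1: "n \<ge> 1"
  proof -
    obtain v where "v \<in> set_pmf \<mu>" using set_pmf_not_empty[of \<mu>] by blast
    thus ?thesis using supp by force
  qed
  have t1: "t \<ge> 1" unfolding t_def using n1 q1
    by (intro ge_one_powr_ge_zero) (auto simp: field_simps)
  show ?thesis
  proof (cases "q = 1")
    case True
    have "z \<ge> 1" using zb t1 unfolding t_def by linarith
    hence "block_collision q z = UNIV" using True
      by (auto simp: block_collision_def intro!: exI[of _ "\<lambda>_. 1"])
    thus ?thesis by simp
  next
    case False
    hence q2: "q \<ge> 2" using q1 by simp
    define s where "s = nat \<lceil>t\<rceil>"
    have s_ge: "real s \<ge> t" and s_lt: "real s < t + 1" using t1 unfolding s_def by linarith+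
    have s1: "s \<ge> 1" using s_ge t1 by linarith
    have sbig: "real s ^ q \<ge> real n ^ (q - 1)"
    proof -
      have "t ^ q = t powr real q" using t1 by (simp add: powr_realpow)
      also have "\<dots> = real n powr ((1 - 1 / real q) * real q)" unfolding t_def by (simp add: powr_powr)
      also have "(1 - 1 / real q) * real q = real (q - 1)" using q1 by (simp add: field_simps of_nat_diff)
      also have "real n powr real (q - 1) = real n ^ (q - 1)" using n1 by (simp add: powr_realpow)
      finally have "real n ^ (q - 1) = t ^ q" ..
      also have "\<dots> \<le> real s ^ q" by (rule power_mono) (use s_ge t1 in auto)
      finally show ?thesis .
    qed
    define k where "k = z div s"
    have kz: "k * s \<le> z" unfolding k_def by (simp add: div_times_less_eq_dividend)
    have kbound: "real k \<ge> real z / (4 * t)" unfolding k_def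
      by (rule k_lower) (use t1 zb s_ge s_lt in \<open>auto simp: t_def\<close>)
    define C where "C i j = greaterThanAtMost ((j - 1) * z + i * s) ((j - 1) * z + i * s + s)" for i j :: nat
    define D where "D i = (\<Union>j\<in>{1..q}. C i j)" for i
    define E where "E i = {x. \<exists>v. \<forall>j\<in>{1..q}. \<exists>l\<in>C i j. x l = (v::nat)}" for i
    have idx: "(l - 1) div z = j - 1 \<and> ((l - 1) mod z) div s = i" if "l \<in> C i j" "i < k" for l i j
    proof (rule chunk_idx)
      show "l \<in> greaterThanAtMost ((j - 1) * z + i * s) ((j - 1) * z + i * s + s)" using that by (simp add: C_def)
      have "(i + 1) * s \<le> k * s" using that(2) by (intro mult_le_mono1) simp
      thus "(i + 1) * s \<le> z" using kz by linarith
    qed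
    have Cbound: "(j - 1) * z < l \<and> l \<le> j * z" if "l \<in> C i j" "i < k" "j \<ge> 1" for l i j
    proof -
      have "(i + 1) * s \<le> k * s" using that(2) by (intro mult_le_mono1) simp
      hence "i * s + s \<le> z" using kz by simp
      moreover have "(j - 1) * z + z = j * z" using that(3) by (cases j) auto
      ultimately show ?thesis using that(1) by (auto simp: C_def)
    qed
    have Ecoll: "E i \<subseteq> block_collision q z" if "i < k" for i
    proof
      fix x assume "x \<in> E i"
      then obtain v where v: "\<forall>j\<in>{1..q}. \<exists>l\<in>C i j. x l = v" by (auto simp: E_def)
      then obtain ind where ind: "\<forall>j\<in>{1..q}. ind j \<in> C i j \<and> x (ind j) = v" by metis
      show "x \<in> block_collision q z" unfolding block_collision_def
        using ind Cbound[OF _ that] by (auto intro!: exI[of _ ind])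
    qed
    have Cfin: "finite (C i j)" for i j by (simp add: C_def)
    have Ccard: "card (C i j) = s" for i j by (simp add: C_def)
    have Cdisj: "disjoint_family_on (C i) {1..q}" if "i < k" for i
      unfolding disjoint_family_on_def
    proof (intro ballI impI)
      fix j j' assume jj: "j \<in> {1..q}" "j' \<in> {1..q}" "j \<noteq> j'"
      show "C i j \<inter> C i j' = {}"
      proof (rule ccontr)
        assume "C i j \<inter> C i j' \<noteq> {}"
        then obtain l where "l \<in> C i j" "l \<in> C i j'" by blast
        hence "j - 1 = j' - 1" using idx that by metis
        thus False using jj by auto
      qed
    qed
    have Ddisj: "disjoint_family_on D {..<k}"
      unfolding disjoint_family_on_def
    proof (intro ballI impI)
      fix i i' assume ii: "i \<in> {..<k}" "i' \<in> {..<k}" "i \<noteq> i'"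
      show "D i \<inter> D i' = {}"
      proof (rule ccontr)
        assume "D i \<inter> D i' \<noteq> {}"
        then obtain l j j' where "l \<in> C i j" "l \<in> C i' j'" by (auto simp: D_def)
        hence "i = i'" using idx ii by (metis lessThan_iff)
        thus False using ii by auto
      qed
    qed
    have PE: "measure_pmf.prob (Pi_pmf (D i) 0 (\<lambda>_. \<mu>)) (E i) \<ge> (1/2) ^ q" if "i < k" for i
      unfolding D_def E_def
      by (rule subexp[OF supp _ _ q2 Cdisj[OF that] Cfin Ccard sbig]) auto
    have Edep: "x \<in> - E i \<longleftrightarrow> y \<in> - E i" if xy: "\<And>l. l \<in> D i \<Longrightarrow> x l = y l" for i x y
    proof -
      have eq: "x l = y l" if "j \<in> {1..q}" "l \<in> C i j" for j l
        by (rule xy) (use that in \<open>auto simp: D_def\<close>)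
      have h: "(\<exists>l\<in>C i j. x l = v) = (\<exists>l\<in>C i j. y l = v)" if "j \<in> {1..q}" for j v
        using eq[OF that] by auto
      have "x \<in> E i \<longleftrightarrow> y \<in> E i" unfolding E_def mem_Collect_eq
        by (intro ex_cong1 ball_cong refl h)
      thus ?thesis by simp
    qed
    define U where "U = (\<Union>i\<in>{..<k}. D i)"
    have UI: "U \<subseteq> {1..q*z}"
    proof
      fix l assume "l \<in> U"
      then obtain i j where ij: "i < k" "j \<in> {1..q}" "l \<in> C i j" by (auto simp: U_def D_def)
      hence "(j - 1) * z < l \<and> l \<le> j * z" using Cbound by auto
      moreover have "j * z \<le> q * z" using ij by (intro mult_le_mono1) auto
      ultimately have "0 < l" "l \<le> q * z" by linarith+
      thus "l \<in> {1..q*z}" by simp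
    qed
    have "measure_pmf.prob ?P (\<Inter>i\<in>{..<k}. - E i) = measure_pmf.prob (Pi_pmf U 0 (\<lambda>_. \<mu>)) (\<Inter>i\<in>{..<k}. - E i)"
    proof (rule Pi_pmf_restrict_event[OF _ UI])
      fix x y :: "nat \<Rightarrow> nat" assume xy: "\<And>l. l \<in> U \<Longrightarrow> x l = y l"
      have "x \<in> - E i \<longleftrightarrow> y \<in> - E i" if "i < k" for i
        by (rule Edep) (use xy that in \<open>auto simp: U_def\<close>)
      thus "x \<in> (\<Inter>i\<in>{..<k}. - E i) \<longleftrightarrow> y \<in> (\<Inter>i\<in>{..<k}. - E i)" by blast
    qed simp
    also have "\<dots> = (\<Prod>i\<in>{..<k}. measure_pmf.prob (Pi_pmf (D i) 0 (\<lambda>_. \<mu>)) (- E i))"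
      unfolding U_def
    proof (rule Pi_pmf_indep[OF _ _ Ddisj])
      show "\<And>j. j \<in> {..<k} \<Longrightarrow> finite (D j)" by (simp add: D_def Cfin)
      show "\<And>j x y. j \<in> {..<k} \<Longrightarrow> (\<And>i. i \<in> D j \<Longrightarrow> x i = y i) \<Longrightarrow> (x \<in> - E j \<longleftrightarrow> y \<in> - E j)"
        by (rule Edep)
    qed simp
    also have "\<dots> \<le> (\<Prod>i\<in>{..<k}. 1 - (1/2) ^ q)"
    proof (rule prod_mono)
      fix i assume "i \<in> {..<k}"
      hence "measure_pmf.prob (Pi_pmf (D i) 0 (\<lambda>_. \<mu>)) (- E i) = 1 - measure_pmf.prob (Pi_pmf (D i) 0 (\<lambda>_. \<mu>)) (E i)"
        using prob_compl_pmf[of "Pi_pmf (D i) 0 (\<lambda>_. \<mu>)" "E i"] by (simp add: Compl_eq_Diff_UNIV)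
      thus "0 \<le> measure_pmf.prob (Pi_pmf (D i) 0 (\<lambda>_. \<mu>)) (- E i) \<and>
            measure_pmf.prob (Pi_pmf (D i) 0 (\<lambda>_. \<mu>)) (- E i) \<le> 1 - (1/2) ^ q"
        using PE[of i] \<open>i \<in> {..<k}\<close> by simp
    qed
    also have "\<dots> = (1 - (1/2) ^ q) ^ k" by simp
    finally have fail: "measure_pmf.prob ?P (\<Inter>i\<in>{..<k}. - E i) \<le> (1 - (1/2) ^ q) ^ k" .
    have "measure_pmf.prob ?P (\<Union>i\<in>{..<k}. E i) \<le> measure_pmf.prob ?P (block_collision q z)"
      by (rule measure_pmf.finite_measure_mono) (use Ecoll in auto)
    moreover have "measure_pmf.prob ?P (\<Union>i\<in>{..<k}. E i) = 1 - measure_pmf.prob ?P (\<Inter>i\<in>{..<k}. - E i)"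
    proof -
      have "(\<Union>i\<in>{..<k}. E i) = UNIV - (\<Inter>i\<in>{..<k}. - E i)" by auto
      thus ?thesis by (simp add: prob_compl_pmf)
    qed
    moreover have "(1 - (1/2) ^ q) ^ k \<le> exp (- c * real z / t)"
    proof -
      define L where "L = ln (1 - (1/2::real) ^ q)"
      have hq: "(1/2::real) ^ q < 1" "0 < (1/2::real) ^ q" using q1 by (auto simp: power_less_one_iff)
      have L0: "L < 0" unfolding L_def using hq by simp
      have "(1 - (1/2::real) ^ q) ^ k = exp (real k * L)"
        unfolding L_def using hq by (simp add: exp_of_nat_mult)
      also have "real k * L \<le> real z / (4 * t) * L"
        by (rule mult_right_mono_neg[OF kbound]) (use L0 in simp)
      also have "2 powr (- real q) = (1/2) ^ q" by (simp add: powr_minus powr_realpow power_one_over inverse_eq_divide)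
      hence "c \<le> - (1/4) * L" using c by (simp add: L_def)
      hence h: "L \<le> - (4 * c)" by linarith
      have h2: "L * real z \<le> - (c * (real z * 4))"
        using mult_right_mono[OF h, of "real z"] by (simp add: algebra_simps)
      have "real z / (4 * t) * L \<le> - c * real z / t"
        using t1 h2 by (simp add: field_simps)
      finally show ?thesis by simp
    qed
    ultimately show ?thesis using fail unfolding t_def by linarith
  qed
qed


theorem lemma2p3:
  fixes n q z :: nat and \<mu> :: "nat pmf"
  assumes "set_pmf \<mu> \<subseteq> {1..n}"
    and "q \<ge> 1"
    and "real z \<ge> 2 * real n powr (1 - 1 / real q)"
  shows "(\<forall>c::real. c \<le> - (1/4) * ln (1 - 2 powr (- real q)) \<longrightarrow>
            measure_pmf.prob (Pi_pmf {1..q*z} 0 (\<lambda>_. \<mu>)) (block_collision q z)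
              \<ge> 1 - exp (- c * real z / real n powr (1 - 1 / real q)))
       \<and> (\<forall>c::real. c \<le> 2 powr (- real q - 2) \<longrightarrow>
            measure_pmf.prob (Pi_pmf {1..q*z} 0 (\<lambda>_. \<mu>)) (block_collision q z)
              \<ge> 1 - exp (- c * real z / real n powr (1 - 1 / real q)))"
proof -
  have main: "measure_pmf.prob (Pi_pmf {1..q*z} 0 (\<lambda>_. \<mu>)) (block_collision q z)
              \<ge> 1 - exp (- c * real z / real n powr (1 - 1 / real q))"
    if "c \<le> - (1/4) * ln (1 - 2 powr (- real q))" for c
    by (rule main_bound[OF assms that])
  define x :: real where "x = 2 powr (- real q)"
  have x: "x = (1/2) ^ q" unfolding x_def
    by (simp add: powr_minus powr_realpow power_one_over inverse_eq_divide)
  have x01: "0 \<le> x" "x < 1" using assms(2) unfolding x by (auto simp: power_less_one_iff)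
  have "2 powr (- real q - 2) = x / 4" unfolding x_def by (simp add: powr_diff)
  also have "x / 4 \<le> - (1/4) * ln (1 - x)" using ln_one_minus_pos_upper_bound[OF x01] by simp
  finally have cmp: "2 powr (- real q - 2) \<le> - (1/4) * ln (1 - 2 powr (- real q))" by (simp add: x_def)
  show ?thesis
  proof (intro conjI allI impI)
    fix c :: real assume "c \<le> - (1/4) * ln (1 - 2 powr (- real q))"
    thus "measure_pmf.prob (Pi_pmf {1..q*z} 0 (\<lambda>_. \<mu>)) (block_collision q z)
              \<ge> 1 - exp (- c * real z / real n powr (1 - 1 / real q))" by (rule main)
  next
    fix c :: real assume "c \<le> 2 powr (- real q - 2)"
    hence "c \<le> - (1/4) * ln (1 - 2 powr (- real q))" using cmp by linarith
    thus "measure_pmf.prob (Pi_pmf {1..q*z} 0 (\<lambda>_. \<mu>)) (block_collision q z)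
              \<ge> 1 - exp (- c * real z / real n powr (1 - 1 / real q))" by (rule main)
  qed
qed

end
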